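(* Let $M$ be a $4$-dimensional manifold with local coordinates $(x^1,\dots,x^4)$, $e_i=\partial/\partial x^i$, and Riemannian metric $g$ with components \[(g_{ij})=\begin{pmatrix} A&B&C&B\\ B&A&B&C\\ C&B&A&B\\ B&C&B&A\end{pmatrix},\] $A,B,C$ smooth functions with $A>C>B>0$. Let $P$ be the almost product structure with component matrix having rows $(0,0,1,0),(0,0,0,1),(1,0,0,0),(0,1,0,0)$. Then $(M,g,P)$ belongs to the class $\mathcal{W}_1$ if and only if \[(A+C)(B_4-B_2)=B(A_4-C_2+C_4-A_2),\qquad (A+C)(B_3-B_1)=B(A_3-C_1+C_3-A_1),\] where $A_i=\partial A/\partial x^i$, $B_i=\partial B/\partial x^i$, $C_i=\partial C/\partial x^i$.
   Context: Let $\nabla$ be the Levi-Civita connection of $g$, $F(x,y,z)=g((\nabla_xP)y,z)$, and $\theta(x)=g^{ij}F(e_i,e_j,x)$ with $(g^{ij})$ the inverse of $(g_{ij})$. The manifold $(M,g,P)$ belongs to the class $\mathcal{W}_1$ if for all vector fields $x,y,z$: \[F(x,y,z)=\tfrac14\big[g(x,y)\theta(z)+g(x,z)\theta(y)-g(x,Py)\theta(Pz)-g(x,Pz)\theta(Py)\big].\] *)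

theory Defs
  imports "HOL-Analysis.Analysis"
begin

text \<open>A coordinate chart of the 4-manifold is modelled by an open set U of real^4.
  Coordinates x^1..x^4 correspond to indices 1,2,3,4 of the numeral type 4
  (so that the list-based constructor vector, which starts at index 1, matches).\<close>

definition pd :: "(real^4 \<Rightarrow> real) \<Rightarrow> 4 \<Rightarrow> real^4 \<Rightarrow> real" where
  "pd f i p = deriv (\<lambda>t. f (p + t *\<^sub>R axis i 1)) 0"

coinductive smooth_on4 :: "(real^4) set \<Rightarrow> (real^4 \<Rightarrow> real) \<Rightarrow> bool" where
  "f differentiable_on U \<Longrightarrow> (\<And>i. smooth_on4 U (pd f i)) \<Longrightarrow> smooth_on4 U f"

definition gform :: "real^4^4 \<Rightarrow> real^4 \<Rightarrow> real^4 \<Rightarrow> real" where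
  "gform Gm a b = (\<Sum>i\<in>UNIV. \<Sum>j\<in>UNIV. Gm $ i $ j * a $ i * b $ j)"

text \<open>Christoffel symbols Gamma^k_{ij} of the Levi-Civita connection of the metric field G
  (nabla_{e_i} e_j = sum_k Gamma^k_{ij} e_k).\<close>
definition christoffel :: "(real^4 \<Rightarrow> real^4^4) \<Rightarrow> 4 \<Rightarrow> 4 \<Rightarrow> 4 \<Rightarrow> real^4 \<Rightarrow> real" where
  "christoffel G k i j p = (1/2) * (\<Sum>l\<in>UNIV. matrix_inv (G p) $ k $ l *
      (pd (\<lambda>q. G q $ j $ l) i p + pd (\<lambda>q. G q $ i $ l) j p - pd (\<lambda>q. G q $ i $ j) l p))"

text \<open>Components of nabla_{e_i} P for a (1,1)-tensor field P with P e_j = sum_l (P $ l $ j) e_l.\<close>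
definition covP :: "(real^4 \<Rightarrow> real^4^4) \<Rightarrow> (real^4 \<Rightarrow> real^4^4) \<Rightarrow> real^4 \<Rightarrow> 4 \<Rightarrow> real^4^4" where
  "covP G P p i = (\<chi> l j. pd (\<lambda>q. P q $ l $ j) i p
      + (\<Sum>k\<in>UNIV. christoffel G l i k p * P p $ k $ j)
      - (\<Sum>k\<in>UNIV. christoffel G k i j p * P p $ l $ k))"

text \<open>F(x,y,z) = g((nabla_x P) y, z) at the point p, for tangent vectors x,y,z at p.\<close>
definition Ften :: "(real^4 \<Rightarrow> real^4^4) \<Rightarrow> (real^4 \<Rightarrow> real^4^4) \<Rightarrow> real^4 \<Rightarrow> real^4 \<Rightarrow> real^4 \<Rightarrow> real^4 \<Rightarrow> real" where
  "Ften G P p x y z = gform (G p) (\<Sum>i\<in>UNIV. x $ i *\<^sub>R (covP G P p i *v y)) z"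

definition theta :: "(real^4 \<Rightarrow> real^4^4) \<Rightarrow> (real^4 \<Rightarrow> real^4^4) \<Rightarrow> real^4 \<Rightarrow> real^4 \<Rightarrow> real" where
  "theta G P p x = (\<Sum>i\<in>UNIV. \<Sum>j\<in>UNIV. matrix_inv (G p) $ i $ j * Ften G P p (axis i 1) (axis j 1) x)"

text \<open>The class W_1 (F is tensorial, so the condition is imposed pointwise on all tangent vectors).\<close>
definition in_W1 :: "(real^4) set \<Rightarrow> (real^4 \<Rightarrow> real^4^4) \<Rightarrow> (real^4 \<Rightarrow> real^4^4) \<Rightarrow> bool" where
  "in_W1 U G P \<longleftrightarrow> (\<forall>p\<in>U. \<forall>x y z.
     Ften G P p x y z = (1/4) * (gform (G p) x y * theta G P p z + gform (G p) x z * theta G P p y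
        - gform (G p) x (P p *v y) * theta G P p (P p *v z)
        - gform (G p) x (P p *v z) * theta G P p (P p *v y)))"

definition metricABC :: "(real^4 \<Rightarrow> real) \<Rightarrow> (real^4 \<Rightarrow> real) \<Rightarrow> (real^4 \<Rightarrow> real) \<Rightarrow> real^4 \<Rightarrow> real^4^4" where
  "metricABC A B C p = vector [vector [A p, B p, C p, B p], vector [B p, A p, B p, C p],
                              vector [C p, B p, A p, B p], vector [B p, C p, B p, A p]]"

definition Pstruct :: "real^4 \<Rightarrow> real^4^4" where
  "Pstruct p = vector [vector [0, 0, 1, 0], vector [0, 0, 0, 1], vector [1, 0, 0, 0], vector [0, 1, 0, 0]]"

end

theory Submission
  imports Defs
begin


lemma lin_exp:
  fixes h :: "real^'n \<Rightarrow> real"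
  assumes "linear h"
  shows "h x = (\<Sum>i\<in>UNIV. x$i * h (axis i 1))"
proof -
  have "h x = h (\<Sum>i\<in>UNIV. x$i *\<^sub>R axis i 1)"
    using basis_expansion[of x] by (simp add: scalar_mult_eq_scaleR)
  also have "\<dots> = (\<Sum>i\<in>UNIV. x$i * h (axis i 1))"
    using assms by (simp add: linear_sum linear_scale)
  finally show ?thesis .
qed

lemma tri_zero:
  fixes h :: "real^'n \<Rightarrow> real^'n \<Rightarrow> real^'n \<Rightarrow> real"
  assumes l1: "\<And>y z. linear (\<lambda>x. h x y z)" and l2: "\<And>x z. linear (\<lambda>y. h x y z)"
    and l3: "\<And>x y. linear (\<lambda>z. h x y z)"
    and b: "\<And>i j k. h (axis i 1) (axis j 1) (axis k 1) = 0"
  shows "h x y z = 0"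
proof -
  have "h (axis i 1) (axis j 1) z = 0" for i j
    using lin_exp[OF l3, of "axis i 1" "axis j 1" z] b by simp
  then have "h (axis i 1) y z = 0" for i
    using lin_exp[OF l2, of "axis i 1" y z] by simp
  then show ?thesis
    using lin_exp[OF l1, of x y z] by simp
qed

lemma gform_add1: "gform M (a + a') b = gform M a b + gform M a' b"
  unfolding gform_def by (simp add: algebra_simps sum.distrib)
lemma gform_add2: "gform M a (b + b') = gform M a b + gform M a b'"
  unfolding gform_def by (simp add: algebra_simps sum.distrib)
lemma gform_scale1: "gform M (r *\<^sub>R a) b = r * gform M a b"
  unfolding gform_def by (simp add: algebra_simps sum_distrib_left)
lemma gform_scale2: "gform M a (r *\<^sub>R b) = r * gform M a b"
  unfolding gform_def by (simp add: algebra_simps sum_distrib_left)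

lemma Ften_add1: "Ften G P p (x + x') y z = Ften G P p x y z + Ften G P p x' y z"
  unfolding Ften_def by (simp add: scaleR_add_left sum.distrib gform_add1)
lemma Ften_scale1: "Ften G P p (r *\<^sub>R x) y z = r * Ften G P p x y z"
  unfolding Ften_def by (simp add: scaleR_sum_right gform_scale1 flip: gform_scale1)
lemma Ften_add2: "Ften G P p x (y + y') z = Ften G P p x y z + Ften G P p x y' z"
  unfolding Ften_def by (simp add: matrix_vector_right_distrib scaleR_add_right sum.distrib gform_add1)
lemma Ften_scale2: "Ften G P p x (r *\<^sub>R y) z = r * Ften G P p x y z"
  unfolding Ften_def by (simp add: matrix_vector_mult_scaleR scaleR_sum_right mult.commute flip: gform_scale1)
lemma Ften_add3: "Ften G P p x y (z + z') = Ften G P p x y z + Ften G P p x y z'"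
  unfolding Ften_def by (simp add: gform_add2)
lemma Ften_scale3: "Ften G P p x y (r *\<^sub>R z) = r * Ften G P p x y z"
  unfolding Ften_def by (simp add: gform_scale2)
lemma theta_add: "theta G P p (z + z') = theta G P p z + theta G P p z'"
  unfolding theta_def by (simp add: Ften_add3 algebra_simps sum.distrib)
lemma theta_scale: "theta G P p (r *\<^sub>R z) = r * theta G P p z"
  unfolding theta_def by (simp add: Ften_scale3 algebra_simps sum_distrib_left)

lemma W1_basis:
  "in_W1 U G P \<longleftrightarrow> (\<forall>p\<in>U. \<forall>i j k.
     Ften G P p (axis i 1) (axis j 1) (axis k 1) = (1/4) * (gform (G p) (axis i 1) (axis j 1) * theta G P p (axis k 1)
        + gform (G p) (axis i 1) (axis k 1) * theta G P p (axis j 1)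
        - gform (G p) (axis i 1) (P p *v axis j 1) * theta G P p (P p *v axis k 1)
        - gform (G p) (axis i 1) (P p *v axis k 1) * theta G P p (P p *v axis j 1)))"
  (is "_ \<longleftrightarrow> (\<forall>p\<in>U. \<forall>i j k. ?c p i j k)")
proof
  assume "in_W1 U G P" then show "\<forall>p\<in>U. \<forall>i j k. ?c p i j k" unfolding in_W1_def by blast
next
  assume H: "\<forall>p\<in>U. \<forall>i j k. ?c p i j k"
  show "in_W1 U G P" unfolding in_W1_def
  proof (intro ballI allI)
    fix p x y z assume "p \<in> U"
    define h where "h x y z = Ften G P p x y z - (1/4) * (gform (G p) x y * theta G P p z + gform (G p) x z * theta G P p y
        - gform (G p) x (P p *v y) * theta G P p (P p *v z)
        - gform (G p) x (P p *v z) * theta G P p (P p *v y))" for x y z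
    have "h x y z = 0"
    proof (rule tri_zero)
      show "linear (\<lambda>x. h x y z)" for y z
        by (rule linearI) (simp_all add: h_def Ften_add1 Ften_scale1 gform_add1 gform_scale1 algebra_simps)
      show "linear (\<lambda>y. h x y z)" for x z
        by (rule linearI) (simp_all add: h_def Ften_add2 Ften_scale2 gform_add2 gform_scale2 theta_add theta_scale
             matrix_vector_right_distrib matrix_vector_mult_scaleR algebra_simps)
      show "linear (\<lambda>z. h x y z)" for x y
        by (rule linearI) (simp_all add: h_def Ften_add3 Ften_scale3 gform_add2 gform_scale2 theta_add theta_scale
             matrix_vector_right_distrib matrix_vector_mult_scaleR algebra_simps)
      show "h (axis i 1) (axis j 1) (axis k 1) = 0" for i j k
        using H \<open>p \<in> U\<close> unfolding h_def by simp
    qed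
    then show "Ften G P p x y z = (1/4) * (gform (G p) x y * theta G P p z + gform (G p) x z * theta G P p y
        - gform (G p) x (P p *v y) * theta G P p (P p *v z)
        - gform (G p) x (P p *v z) * theta G P p (P p *v y))" unfolding h_def by simp
  qed
qed



definition G1 :: "(real^4 \<Rightarrow> real^4^4) \<Rightarrow> 4 \<Rightarrow> 4 \<Rightarrow> 4 \<Rightarrow> real^4 \<Rightarrow> real" where
  "G1 G i j l p = (1/2) * (pd (\<lambda>q. G q $ j $ l) i p + pd (\<lambda>q. G q $ i $ l) j p - pd (\<lambda>q. G q $ i $ j) l p)"

lemma chr_eq: "christoffel G k i j p = (\<Sum>l\<in>UNIV. matrix_inv (G p) $ k $ l * G1 G i j l p)"
  unfolding christoffel_def G1_def by (simp add: sum_distrib_left algebra_simps)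

lemma swap4: "(\<Sum>l\<in>(UNIV::4 set). \<Sum>m\<in>(UNIV::4 set). f l m) = (\<Sum>m\<in>UNIV. \<Sum>l\<in>UNIV. (f l m :: real))"
  by (rule sum.swap)

lemma key:
  assumes "G p ** matrix_inv (G p) = mat 1"
  shows "(\<Sum>l\<in>UNIV. G p $ k $ l * christoffel G l i m p) = G1 G i m k p"
proof -
  have "(\<Sum>l\<in>UNIV. G p $ k $ l * christoffel G l i m p)
      = (\<Sum>l\<in>UNIV. \<Sum>n\<in>UNIV. G p $ k $ l * matrix_inv (G p) $ l $ n * G1 G i m n p)"
    unfolding chr_eq by (simp add: sum_distrib_left mult.assoc)
  also have "\<dots> = (\<Sum>n\<in>UNIV. \<Sum>l\<in>UNIV. G p $ k $ l * matrix_inv (G p) $ l $ n * G1 G i m n p)"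
    by (rule swap4)
  also have "\<dots> = (\<Sum>n\<in>UNIV. (\<Sum>l\<in>UNIV. G p $ k $ l * matrix_inv (G p) $ l $ n) * G1 G i m n p)"
    by (simp add: sum_distrib_right)
  also have "\<dots> = (\<Sum>n\<in>UNIV. (G p ** matrix_inv (G p)) $ k $ n * G1 G i m n p)"
    by (simp add: matrix_matrix_mult_def)
  also have "\<dots> = G1 G i m k p"
    unfolding assms by (simp add: mat_def if_distrib[where f="\<lambda>x. x * _"] cong: if_cong)
  finally show ?thesis .
qed

lemma sum_axis_scale: "(\<Sum>a\<in>UNIV. axis i (1::real) $ a *\<^sub>R f a) = (f i :: 'b::real_vector)"
proof -
  have "(\<Sum>a\<in>UNIV. axis i (1::real) $ a *\<^sub>R f a) = (\<Sum>a\<in>UNIV. if a = i then f a else 0)"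
    by (rule sum.cong) (auto simp: axis_def)
  then show ?thesis by simp
qed

lemma mv_axis: "((M::real^'n^'m) *v axis j 1) $ l = M $ l $ j"
proof -
  have "(M *v axis j 1) $ l = (\<Sum>a\<in>UNIV. M $ l $ a * axis j 1 $ a)"
    by (simp add: matrix_vector_mult_def)
  also have "\<dots> = (\<Sum>a\<in>UNIV. if a = j then M $ l $ a else 0)"
    by (rule sum.cong) (auto simp: axis_def)
  finally have "(M *v axis j 1) $ l = (\<Sum>a\<in>UNIV. if a = j then M $ l $ a else 0)" .
  then show ?thesis by simp
qed

lemma gform_axis2: "gform M v (axis k 1) = (\<Sum>l\<in>UNIV. M $ l $ k * v $ l)"
proof -
  have "gform M v (axis k 1) = (\<Sum>l\<in>UNIV. \<Sum>a\<in>UNIV. if a = k then M $ l $ a * v $ l else 0)"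
    unfolding gform_def by (intro sum.cong) (auto simp: axis_def)
  then show ?thesis by simp
qed

lemma F_basis:
  assumes inv: "G p ** matrix_inv (G p) = mat 1"
    and sym: "\<And>a b. G p $ a $ b = G p $ b $ a"
    and pdP: "\<And>l j. pd (\<lambda>q. P q $ l $ j) i p = 0"
    and comp: "\<And>m k. (\<Sum>l\<in>UNIV. P p $ l $ m * G p $ l $ k) = (\<Sum>l\<in>UNIV. G p $ m $ l * P p $ l $ k)"
  shows "Ften G P p (axis i 1) (axis j 1) (axis k 1)
      = (\<Sum>m\<in>UNIV. P p $ m $ j * G1 G i m k p) - (\<Sum>l\<in>UNIV. P p $ l $ k * G1 G i j l p)"
proof -
  have s1: "Ften G P p (axis i 1) (axis j 1) (axis k 1) = (\<Sum>l\<in>UNIV. covP G P p i $ l $ j * G p $ l $ k)"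
    unfolding Ften_def gform_axis2 sum_axis_scale by (simp add: mv_axis mult.commute)
  have s3: "(\<Sum>l\<in>UNIV. (\<Sum>m\<in>UNIV. christoffel G l i m p * P p $ m $ j) * G p $ l $ k)
      = (\<Sum>m\<in>UNIV. P p $ m $ j * G1 G i m k p)"
  proof -
    have "(\<Sum>l\<in>UNIV. (\<Sum>m\<in>UNIV. christoffel G l i m p * P p $ m $ j) * G p $ l $ k)
        = (\<Sum>l\<in>UNIV. \<Sum>m\<in>UNIV. P p $ m $ j * (G p $ k $ l * christoffel G l i m p))"
      by (simp add: sum_distrib_right sum_distrib_left sym mult_ac)
    also have "\<dots> = (\<Sum>m\<in>UNIV. \<Sum>l\<in>UNIV. P p $ m $ j * (G p $ k $ l * christoffel G l i m p))"
      by (rule swap4)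
    also have "\<dots> = (\<Sum>m\<in>UNIV. P p $ m $ j * (\<Sum>l\<in>UNIV. G p $ k $ l * christoffel G l i m p))"
      by (simp add: sum_distrib_left)
    finally show ?thesis by (simp add: key[where G=G and p=p, OF inv])
  qed
  have s4: "(\<Sum>l\<in>UNIV. (\<Sum>m\<in>UNIV. christoffel G m i j p * P p $ l $ m) * G p $ l $ k)
      = (\<Sum>l\<in>UNIV. P p $ l $ k * G1 G i j l p)"
  proof -
    have "(\<Sum>l\<in>UNIV. (\<Sum>m\<in>UNIV. christoffel G m i j p * P p $ l $ m) * G p $ l $ k)
        = (\<Sum>l\<in>UNIV. \<Sum>m\<in>UNIV. christoffel G m i j p * (P p $ l $ m * G p $ l $ k))"
      by (simp add: sum_distrib_right sum_distrib_left mult_ac)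
    also have "\<dots> = (\<Sum>m\<in>UNIV. \<Sum>l\<in>UNIV. christoffel G m i j p * (P p $ l $ m * G p $ l $ k))"
      by (rule swap4)
    also have "\<dots> = (\<Sum>m\<in>UNIV. christoffel G m i j p * (\<Sum>l\<in>UNIV. G p $ m $ l * P p $ l $ k))"
      by (simp add: comp flip: sum_distrib_left)
    also have "\<dots> = (\<Sum>m\<in>UNIV. \<Sum>l\<in>UNIV. P p $ l $ k * (G p $ l $ m * christoffel G m i j p))"
      by (simp add: sum_distrib_left sym mult_ac)
    also have "\<dots> = (\<Sum>l\<in>UNIV. \<Sum>m\<in>UNIV. P p $ l $ k * (G p $ l $ m * christoffel G m i j p))"
      by (rule swap4)
    also have "\<dots> = (\<Sum>l\<in>UNIV. P p $ l $ k * (\<Sum>m\<in>UNIV. G p $ l $ m * christoffel G m i j p))"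
      by (simp add: sum_distrib_left)
    finally show ?thesis by (simp add: key[where G=G and p=p, OF inv])
  qed
  have "covP G P p i $ l $ j = (\<Sum>k\<in>UNIV. christoffel G l i k p * P p $ k $ j)
      - (\<Sum>k\<in>UNIV. christoffel G k i j p * P p $ l $ k)" for l
    by (simp add: covP_def pdP)
  then show ?thesis
    unfolding s1 using s3 s4 by (simp add: left_diff_distrib sum_subtractf)
qed



lemma vector4 [simp]:
 "(vector [x1,x2,x3,x4] ::('a::zero)^4)$1 = x1"
 "(vector [x1,x2,x3,x4] ::('a::zero)^4)$2 = x2"
 "(vector [x1,x2,x3,x4] ::('a::zero)^4)$3 = x3"
 "(vector [x1,x2,x3,x4] ::('a::zero)^4)$4 = x4"
  unfolding vector_def by simp_all

definition Dt :: "real \<Rightarrow> real \<Rightarrow> real \<Rightarrow> real" where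
  "Dt a b c = 4 * ((a + 2*b + c) * (a - c) * (a - 2*b + c))"

definition Gm :: "real \<Rightarrow> real \<Rightarrow> real \<Rightarrow> real^4^4" where
  "Gm a b c = vector [vector [a, b, c, b], vector [b, a, b, c], vector [c, b, a, b], vector [b, c, b, a]]"

definition sg :: "4 \<Rightarrow> 4" where
  "sg i = (if i = 1 then 3 else if i = 2 then 4 else if i = 3 then 1 else 2)"

definition C1 :: "(4 \<Rightarrow> real) \<Rightarrow> (4 \<Rightarrow> real) \<Rightarrow> (4 \<Rightarrow> real) \<Rightarrow> 4 \<Rightarrow> 4 \<Rightarrow> 4 \<Rightarrow> real" where
  "C1 dA dB dC i j l = (1/2) * (Gm (dA i) (dB i) (dC i) $ j $ l + Gm (dA j) (dB j) (dC j) $ i $ l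
      - Gm (dA l) (dB l) (dC l) $ i $ j)"

definition Fc :: "(4 \<Rightarrow> real) \<Rightarrow> (4 \<Rightarrow> real) \<Rightarrow> (4 \<Rightarrow> real) \<Rightarrow> 4 \<Rightarrow> 4 \<Rightarrow> 4 \<Rightarrow> real" where
  "Fc dA dB dC i j k = C1 dA dB dC i (sg j) k - C1 dA dB dC i j (sg k)"

definition tc :: "real \<Rightarrow> real \<Rightarrow> real \<Rightarrow> (4 \<Rightarrow> real) \<Rightarrow> (4 \<Rightarrow> real) \<Rightarrow> (4 \<Rightarrow> real) \<Rightarrow> 4 \<Rightarrow> real" where
  "tc a b c dA dB dC k = (if k = 1 then 8*a^2*(dA 3) - 8*a^2*(dC 1) + 16*a*b*(dB 1) - 16*a*b*(dB 3) + 8*a*c*(dA 1) + 8*a*c*(dA 3) - 8*a*c*(dC 1) - 8*a*c*(dC 3) - 16*b^2*(dA 1) - 16*b^2*(dA 3) + 16*b^2*(dC 1) + 16*b^2*(dC 3) - 16*b*c*(dB 1) + 16*b*c*(dB 3) + 8*c^2*(dA 1) - 8*c^2*(dC 3) else if k = 2 then 8*a^2*(dA 4) - 8*a^2*(dC 2) + 16*a*b*(dB 2) - 16*a*b*(dB 4) + 8*a*c*(dA 2) + 8*a*c*(dA 4) - 8*a*c*(dC 2) - 8*a*c*(dC 4) - 16*b^2*(dA 2) - 16*b^2*(dA 4) + 16*b^2*(dC 2) + 16*b^2*(dC 4) - 16*b*c*(dB 2) + 16*b*c*(dB 4) + 8*c^2*(dA 2) - 8*c^2*(dC 4) else if k =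 3 then 8*a^2*(dA 1) - 8*a^2*(dC 3) - 16*a*b*(dB 1) + 16*a*b*(dB 3) + 8*a*c*(dA 1) + 8*a*c*(dA 3) - 8*a*c*(dC 1) - 8*a*c*(dC 3) - 16*b^2*(dA 1) - 16*b^2*(dA 3) + 16*b^2*(dC 1) + 16*b^2*(dC 3) + 16*b*c*(dB 1) - 16*b*c*(dB 3) + 8*c^2*(dA 3) - 8*c^2*(dC 1) else 8*a^2*(dA 2) - 8*a^2*(dC 4) - 16*a*b*(dB 2) + 16*a*b*(dB 4) + 8*a*c*(dA 2) + 8*a*c*(dA 4) - 8*a*c*(dC 2) - 8*a*c*(dC 4) - 16*b^2*(dA 2) - 16*b^2*(dA 4) + 16*b^2*(dC 2) + 16*b^2*(dC 4) + 16*b*c*(dB 2) - 16*b*c*(dB 4) + 8*c^2*(dA 4) - 8*c^2*(dC 2))"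

lemma tc_simps:
  "tc a b c dA dB dC 1 = 8*a^2*(dA 3) - 8*a^2*(dC 1) + 16*a*b*(dB 1) - 16*a*b*(dB 3) + 8*a*c*(dA 1) + 8*a*c*(dA 3) - 8*a*c*(dC 1) - 8*a*c*(dC 3) - 16*b^2*(dA 1) - 16*b^2*(dA 3) + 16*b^2*(dC 1) + 16*b^2*(dC 3) - 16*b*c*(dB 1) + 16*b*c*(dB 3) + 8*c^2*(dA 1) - 8*c^2*(dC 3)"
  "tc a b c dA dB dC 2 = 8*a^2*(dA 4) - 8*a^2*(dC 2) + 16*a*b*(dB 2) - 16*a*b*(dB 4) + 8*a*c*(dA 2) + 8*a*c*(dA 4) - 8*a*c*(dC 2) - 8*a*c*(dC 4) - 16*b^2*(dA 2) - 16*b^2*(dA 4) + 16*b^2*(dC 2) + 16*b^2*(dC 4) - 16*b*c*(dB 2) + 16*b*c*(dB 4) + 8*c^2*(dA 2) - 8*c^2*(dC 4)"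
  "tc a b c dA dB dC 3 = 8*a^2*(dA 1) - 8*a^2*(dC 3) - 16*a*b*(dB 1) + 16*a*b*(dB 3) + 8*a*c*(dA 1) + 8*a*c*(dA 3) - 8*a*c*(dC 1) - 8*a*c*(dC 3) - 16*b^2*(dA 1) - 16*b^2*(dA 3) + 16*b^2*(dC 1) + 16*b^2*(dC 3) + 16*b*c*(dB 1) - 16*b*c*(dB 3) + 8*c^2*(dA 3) - 8*c^2*(dC 1)"
  "tc a b c dA dB dC 4 = 8*a^2*(dA 2) - 8*a^2*(dC 4) - 16*a*b*(dB 2) + 16*a*b*(dB 4) + 8*a*c*(dA 2) + 8*a*c*(dA 4) - 8*a*c*(dC 2) - 8*a*c*(dC 4) - 16*b^2*(dA 2) - 16*b^2*(dA 4) + 16*b^2*(dC 2) + 16*b^2*(dC 4) + 16*b*c*(dB 2) - 16*b*c*(dB 4) + 8*c^2*(dA 4) - 8*c^2*(dC 2)"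
  by (simp_all add: tc_def)

lemma sg_simps [simp]: "sg 1 = 3" "sg 2 = 4" "sg 3 = 1" "sg 4 = 2"
  by (simp_all add: sg_def)

definition cond :: "real \<Rightarrow> real \<Rightarrow> real \<Rightarrow> (4 \<Rightarrow> real) \<Rightarrow> (4 \<Rightarrow> real) \<Rightarrow> (4 \<Rightarrow> real) \<Rightarrow> 4 \<Rightarrow> 4 \<Rightarrow> 4 \<Rightarrow> bool" where
  "cond a b c dA dB dC i j k \<longleftrightarrow> Fc dA dB dC i j k = (1/4) * (
      Gm a b c $ i $ j * (tc a b c dA dB dC k / Dt a b c) + Gm a b c $ i $ k * (tc a b c dA dB dC j / Dt a b c)
    - Gm a b c $ i $ sg j * (tc a b c dA dB dC (sg k) / Dt a b c)
    - Gm a b c $ i $ sg k * (tc a b c dA dB dC (sg j) / Dt a b c))"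

lemma Dt_nz: "a > c \<Longrightarrow> c > b \<Longrightarrow> b > (0::real) \<Longrightarrow> Dt a b c \<noteq> 0"
  unfolding Dt_def by auto

definition E1 :: "real \<Rightarrow> real \<Rightarrow> real \<Rightarrow> (4 \<Rightarrow> real) \<Rightarrow> (4 \<Rightarrow> real) \<Rightarrow> (4 \<Rightarrow> real) \<Rightarrow> real" where
  "E1 a b c dA dB dC = (a + c) * (dB 4 - dB 2) - b * (dA 4 - dC 2 + dC 4 - dA 2)"
definition E2 :: "real \<Rightarrow> real \<Rightarrow> real \<Rightarrow> (4 \<Rightarrow> real) \<Rightarrow> (4 \<Rightarrow> real) \<Rightarrow> (4 \<Rightarrow> real) \<Rightarrow> real" where
  "E2 a b c dA dB dC = (a + c) * (dB 3 - dB 1) - b * (dA 3 - dC 1 + dC 3 - dA 1)"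
definition Rr :: "real \<Rightarrow> real \<Rightarrow> real \<Rightarrow> (4 \<Rightarrow> real) \<Rightarrow> (4 \<Rightarrow> real) \<Rightarrow> (4 \<Rightarrow> real) \<Rightarrow> 4 \<Rightarrow> 4 \<Rightarrow> 4 \<Rightarrow> real" where
  "Rr a b c dA dB dC i j k = 4 * Dt a b c * Fc dA dB dC i j k - (
      Gm a b c $ i $ j * tc a b c dA dB dC k + Gm a b c $ i $ k * tc a b c dA dB dC j
    - Gm a b c $ i $ sg j * tc a b c dA dB dC (sg k)
    - Gm a b c $ i $ sg k * tc a b c dA dB dC (sg j))"

lemmas Rr_unf = Rr_def Fc_def C1_def sg_simps tc_simps Gm_def Dt_def E1_def E2_def

lemma Rr_111: "Rr a b c dA dB dC 1 1 1 = (0) * E1 a b c dA dB dC + (32*a*b - 32*b*c) * E2 a b c dA dB dC"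
  unfolding Rr_unf by (simp add: algebra_simps power2_eq_square)

lemma Rr_112: "Rr a b c dA dB dC 1 1 2 = (16*a*b - 16*b*c) * E1 a b c dA dB dC + (8*a^2 - 8*c^2) * E2 a b c dA dB dC"
  unfolding Rr_unf by (simp add: algebra_simps power2_eq_square)

lemma Rr_113: "Rr a b c dA dB dC 1 1 3 = (0) * E1 a b c dA dB dC + (0) * E2 a b c dA dB dC"
  unfolding Rr_unf by (simp add: algebra_simps power2_eq_square)

lemma Rr_114: "Rr a b c dA dB dC 1 1 4 = (-16*a*b + 16*b*c) * E1 a b c dA dB dC + (8*a^2 - 8*c^2) * E2 a b c dA dB dC"
  unfolding Rr_unf by (simp add: algebra_simps power2_eq_square)

lemma Rr_121: "Rr a b c dA dB dC 1 2 1 = (16*a*b - 16*b*c) * E1 a b c dA dB dC + (8*a^2 - 8*c^2) * E2 a b c dA dB dC"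
  unfolding Rr_unf by (simp add: algebra_simps power2_eq_square)

lemma Rr_122: "Rr a b c dA dB dC 1 2 2 = (16*a^2 - 16*c^2) * E1 a b c dA dB dC + (0) * E2 a b c dA dB dC"
  unfolding Rr_unf by (simp add: algebra_simps power2_eq_square)

lemma Rr_123: "Rr a b c dA dB dC 1 2 3 = (16*a*b - 16*b*c) * E1 a b c dA dB dC + (-8*a^2 + 8*c^2) * E2 a b c dA dB dC"
  unfolding Rr_unf by (simp add: algebra_simps power2_eq_square)

lemma Rr_124: "Rr a b c dA dB dC 1 2 4 = (0) * E1 a b c dA dB dC + (0) * E2 a b c dA dB dC"
  unfolding Rr_unf by (simp add: algebra_simps power2_eq_square)

lemma Rr_131: "Rr a b c dA dB dC 1 3 1 = (0) * E1 a b c dA dB dC + (0) * E2 a b c dA dB dC"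
  unfolding Rr_unf by (simp add: algebra_simps power2_eq_square)

lemma Rr_132: "Rr a b c dA dB dC 1 3 2 = (16*a*b - 16*b*c) * E1 a b c dA dB dC + (-8*a^2 + 8*c^2) * E2 a b c dA dB dC"
  unfolding Rr_unf by (simp add: algebra_simps power2_eq_square)

lemma Rr_133: "Rr a b c dA dB dC 1 3 3 = (0) * E1 a b c dA dB dC + (-32*a*b + 32*b*c) * E2 a b c dA dB dC"
  unfolding Rr_unf by (simp add: algebra_simps power2_eq_square)

lemma Rr_134: "Rr a b c dA dB dC 1 3 4 = (-16*a*b + 16*b*c) * E1 a b c dA dB dC + (-8*a^2 + 8*c^2) * E2 a b c dA dB dC"
  unfolding Rr_unf by (simp add: algebra_simps power2_eq_square)

lemma Rr_141: "Rr a b c dA dB dC 1 4 1 = (-16*a*b + 16*b*c) * E1 a b c dA dB dC + (8*a^2 - 8*c^2) * E2 a b c dA dB dC"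
  unfolding Rr_unf by (simp add: algebra_simps power2_eq_square)

lemma Rr_142: "Rr a b c dA dB dC 1 4 2 = (0) * E1 a b c dA dB dC + (0) * E2 a b c dA dB dC"
  unfolding Rr_unf by (simp add: algebra_simps power2_eq_square)

lemma Rr_143: "Rr a b c dA dB dC 1 4 3 = (-16*a*b + 16*b*c) * E1 a b c dA dB dC + (-8*a^2 + 8*c^2) * E2 a b c dA dB dC"
  unfolding Rr_unf by (simp add: algebra_simps power2_eq_square)

lemma Rr_144: "Rr a b c dA dB dC 1 4 4 = (-16*a^2 + 16*c^2) * E1 a b c dA dB dC + (0) * E2 a b c dA dB dC"
  unfolding Rr_unf by (simp add: algebra_simps power2_eq_square)

lemma Rr_211: "Rr a b c dA dB dC 2 1 1 = (0) * E1 a b c dA dB dC + (16*a^2 - 16*c^2) * E2 a b c dA dB dC"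
  unfolding Rr_unf by (simp add: algebra_simps power2_eq_square)

lemma Rr_212: "Rr a b c dA dB dC 2 1 2 = (8*a^2 - 8*c^2) * E1 a b c dA dB dC + (16*a*b - 16*b*c) * E2 a b c dA dB dC"
  unfolding Rr_unf by (simp add: algebra_simps power2_eq_square)

lemma Rr_213: "Rr a b c dA dB dC 2 1 3 = (0) * E1 a b c dA dB dC + (0) * E2 a b c dA dB dC"
  unfolding Rr_unf by (simp add: algebra_simps power2_eq_square)

lemma Rr_214: "Rr a b c dA dB dC 2 1 4 = (-8*a^2 + 8*c^2) * E1 a b c dA dB dC + (16*a*b - 16*b*c) * E2 a b c dA dB dC"
  unfolding Rr_unf by (simp add: algebra_simps power2_eq_square)

lemma Rr_221: "Rr a b c dA dB dC 2 2 1 = (8*a^2 - 8*c^2) * E1 a b c dA dB dC + (16*a*b - 16*b*c) * E2 a b c dA dB dC"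
  unfolding Rr_unf by (simp add: algebra_simps power2_eq_square)

lemma Rr_222: "Rr a b c dA dB dC 2 2 2 = (32*a*b - 32*b*c) * E1 a b c dA dB dC + (0) * E2 a b c dA dB dC"
  unfolding Rr_unf by (simp add: algebra_simps power2_eq_square)

lemma Rr_223: "Rr a b c dA dB dC 2 2 3 = (8*a^2 - 8*c^2) * E1 a b c dA dB dC + (-16*a*b + 16*b*c) * E2 a b c dA dB dC"
  unfolding Rr_unf by (simp add: algebra_simps power2_eq_square)

lemma Rr_224: "Rr a b c dA dB dC 2 2 4 = (0) * E1 a b c dA dB dC + (0) * E2 a b c dA dB dC"
  unfolding Rr_unf by (simp add: algebra_simps power2_eq_square)

lemma Rr_231: "Rr a b c dA dB dC 2 3 1 = (0) * E1 a b c dA dB dC + (0) * E2 a b c dA dB dC"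
  unfolding Rr_unf by (simp add: algebra_simps power2_eq_square)

lemma Rr_232: "Rr a b c dA dB dC 2 3 2 = (8*a^2 - 8*c^2) * E1 a b c dA dB dC + (-16*a*b + 16*b*c) * E2 a b c dA dB dC"
  unfolding Rr_unf by (simp add: algebra_simps power2_eq_square)

lemma Rr_233: "Rr a b c dA dB dC 2 3 3 = (0) * E1 a b c dA dB dC + (-16*a^2 + 16*c^2) * E2 a b c dA dB dC"
  unfolding Rr_unf by (simp add: algebra_simps power2_eq_square)

lemma Rr_234: "Rr a b c dA dB dC 2 3 4 = (-8*a^2 + 8*c^2) * E1 a b c dA dB dC + (-16*a*b + 16*b*c) * E2 a b c dA dB dC"
  unfolding Rr_unf by (simp add: algebra_simps power2_eq_square)

lemma Rr_241: "Rr a b c dA dB dC 2 4 1 = (-8*a^2 + 8*c^2) * E1 a b c dA dB dC + (16*a*b - 16*b*c) * E2 a b c dA dB dC"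
  unfolding Rr_unf by (simp add: algebra_simps power2_eq_square)

lemma Rr_242: "Rr a b c dA dB dC 2 4 2 = (0) * E1 a b c dA dB dC + (0) * E2 a b c dA dB dC"
  unfolding Rr_unf by (simp add: algebra_simps power2_eq_square)

lemma Rr_243: "Rr a b c dA dB dC 2 4 3 = (-8*a^2 + 8*c^2) * E1 a b c dA dB dC + (-16*a*b + 16*b*c) * E2 a b c dA dB dC"
  unfolding Rr_unf by (simp add: algebra_simps power2_eq_square)

lemma Rr_244: "Rr a b c dA dB dC 2 4 4 = (-32*a*b + 32*b*c) * E1 a b c dA dB dC + (0) * E2 a b c dA dB dC"
  unfolding Rr_unf by (simp add: algebra_simps power2_eq_square)

lemma Rr_311: "Rr a b c dA dB dC 3 1 1 = (0) * E1 a b c dA dB dC + (32*a*b - 32*b*c) * E2 a b c dA dB dC"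
  unfolding Rr_unf by (simp add: algebra_simps power2_eq_square)

lemma Rr_312: "Rr a b c dA dB dC 3 1 2 = (16*a*b - 16*b*c) * E1 a b c dA dB dC + (8*a^2 - 8*c^2) * E2 a b c dA dB dC"
  unfolding Rr_unf by (simp add: algebra_simps power2_eq_square)

lemma Rr_313: "Rr a b c dA dB dC 3 1 3 = (0) * E1 a b c dA dB dC + (0) * E2 a b c dA dB dC"
  unfolding Rr_unf by (simp add: algebra_simps power2_eq_square)

lemma Rr_314: "Rr a b c dA dB dC 3 1 4 = (-16*a*b + 16*b*c) * E1 a b c dA dB dC + (8*a^2 - 8*c^2) * E2 a b c dA dB dC"
  unfolding Rr_unf by (simp add: algebra_simps power2_eq_square)

lemma Rr_321: "Rr a b c dA dB dC 3 2 1 = (16*a*b - 16*b*c) * E1 a b c dA dB dC + (8*a^2 - 8*c^2) * E2 a b c dA dB dC"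
  unfolding Rr_unf by (simp add: algebra_simps power2_eq_square)

lemma Rr_322: "Rr a b c dA dB dC 3 2 2 = (16*a^2 - 16*c^2) * E1 a b c dA dB dC + (0) * E2 a b c dA dB dC"
  unfolding Rr_unf by (simp add: algebra_simps power2_eq_square)

lemma Rr_323: "Rr a b c dA dB dC 3 2 3 = (16*a*b - 16*b*c) * E1 a b c dA dB dC + (-8*a^2 + 8*c^2) * E2 a b c dA dB dC"
  unfolding Rr_unf by (simp add: algebra_simps power2_eq_square)

lemma Rr_324: "Rr a b c dA dB dC 3 2 4 = (0) * E1 a b c dA dB dC + (0) * E2 a b c dA dB dC"
  unfolding Rr_unf by (simp add: algebra_simps power2_eq_square)

lemma Rr_331: "Rr a b c dA dB dC 3 3 1 = (0) * E1 a b c dA dB dC + (0) * E2 a b c dA dB dC"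
  unfolding Rr_unf by (simp add: algebra_simps power2_eq_square)

lemma Rr_332: "Rr a b c dA dB dC 3 3 2 = (16*a*b - 16*b*c) * E1 a b c dA dB dC + (-8*a^2 + 8*c^2) * E2 a b c dA dB dC"
  unfolding Rr_unf by (simp add: algebra_simps power2_eq_square)

lemma Rr_333: "Rr a b c dA dB dC 3 3 3 = (0) * E1 a b c dA dB dC + (-32*a*b + 32*b*c) * E2 a b c dA dB dC"
  unfolding Rr_unf by (simp add: algebra_simps power2_eq_square)

lemma Rr_334: "Rr a b c dA dB dC 3 3 4 = (-16*a*b + 16*b*c) * E1 a b c dA dB dC + (-8*a^2 + 8*c^2) * E2 a b c dA dB dC"
  unfolding Rr_unf by (simp add: algebra_simps power2_eq_square)

lemma Rr_341: "Rr a b c dA dB dC 3 4 1 = (-16*a*b + 16*b*c) * E1 a b c dA dB dC + (8*a^2 - 8*c^2) * E2 a b c dA dB dC"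
  unfolding Rr_unf by (simp add: algebra_simps power2_eq_square)

lemma Rr_342: "Rr a b c dA dB dC 3 4 2 = (0) * E1 a b c dA dB dC + (0) * E2 a b c dA dB dC"
  unfolding Rr_unf by (simp add: algebra_simps power2_eq_square)

lemma Rr_343: "Rr a b c dA dB dC 3 4 3 = (-16*a*b + 16*b*c) * E1 a b c dA dB dC + (-8*a^2 + 8*c^2) * E2 a b c dA dB dC"
  unfolding Rr_unf by (simp add: algebra_simps power2_eq_square)

lemma Rr_344: "Rr a b c dA dB dC 3 4 4 = (-16*a^2 + 16*c^2) * E1 a b c dA dB dC + (0) * E2 a b c dA dB dC"
  unfolding Rr_unf by (simp add: algebra_simps power2_eq_square)

lemma Rr_411: "Rr a b c dA dB dC 4 1 1 = (0) * E1 a b c dA dB dC + (16*a^2 - 16*c^2) * E2 a b c dA dB dC"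
  unfolding Rr_unf by (simp add: algebra_simps power2_eq_square)

lemma Rr_412: "Rr a b c dA dB dC 4 1 2 = (8*a^2 - 8*c^2) * E1 a b c dA dB dC + (16*a*b - 16*b*c) * E2 a b c dA dB dC"
  unfolding Rr_unf by (simp add: algebra_simps power2_eq_square)

lemma Rr_413: "Rr a b c dA dB dC 4 1 3 = (0) * E1 a b c dA dB dC + (0) * E2 a b c dA dB dC"
  unfolding Rr_unf by (simp add: algebra_simps power2_eq_square)

lemma Rr_414: "Rr a b c dA dB dC 4 1 4 = (-8*a^2 + 8*c^2) * E1 a b c dA dB dC + (16*a*b - 16*b*c) * E2 a b c dA dB dC"
  unfolding Rr_unf by (simp add: algebra_simps power2_eq_square)

lemma Rr_421: "Rr a b c dA dB dC 4 2 1 = (8*a^2 - 8*c^2) * E1 a b c dA dB dC + (16*a*b - 16*b*c) * E2 a b c dA dB dC"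
  unfolding Rr_unf by (simp add: algebra_simps power2_eq_square)

lemma Rr_422: "Rr a b c dA dB dC 4 2 2 = (32*a*b - 32*b*c) * E1 a b c dA dB dC + (0) * E2 a b c dA dB dC"
  unfolding Rr_unf by (simp add: algebra_simps power2_eq_square)

lemma Rr_423: "Rr a b c dA dB dC 4 2 3 = (8*a^2 - 8*c^2) * E1 a b c dA dB dC + (-16*a*b + 16*b*c) * E2 a b c dA dB dC"
  unfolding Rr_unf by (simp add: algebra_simps power2_eq_square)

lemma Rr_424: "Rr a b c dA dB dC 4 2 4 = (0) * E1 a b c dA dB dC + (0) * E2 a b c dA dB dC"
  unfolding Rr_unf by (simp add: algebra_simps power2_eq_square)

lemma Rr_431: "Rr a b c dA dB dC 4 3 1 = (0) * E1 a b c dA dB dC + (0) * E2 a b c dA dB dC"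
  unfolding Rr_unf by (simp add: algebra_simps power2_eq_square)

lemma Rr_432: "Rr a b c dA dB dC 4 3 2 = (8*a^2 - 8*c^2) * E1 a b c dA dB dC + (-16*a*b + 16*b*c) * E2 a b c dA dB dC"
  unfolding Rr_unf by (simp add: algebra_simps power2_eq_square)

lemma Rr_433: "Rr a b c dA dB dC 4 3 3 = (0) * E1 a b c dA dB dC + (-16*a^2 + 16*c^2) * E2 a b c dA dB dC"
  unfolding Rr_unf by (simp add: algebra_simps power2_eq_square)

lemma Rr_434: "Rr a b c dA dB dC 4 3 4 = (-8*a^2 + 8*c^2) * E1 a b c dA dB dC + (-16*a*b + 16*b*c) * E2 a b c dA dB dC"
  unfolding Rr_unf by (simp add: algebra_simps power2_eq_square)

lemma Rr_441: "Rr a b c dA dB dC 4 4 1 = (-8*a^2 + 8*c^2) * E1 a b c dA dB dC + (16*a*b - 16*b*c) * E2 a b c dA dB dC"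
  unfolding Rr_unf by (simp add: algebra_simps power2_eq_square)

lemma Rr_442: "Rr a b c dA dB dC 4 4 2 = (0) * E1 a b c dA dB dC + (0) * E2 a b c dA dB dC"
  unfolding Rr_unf by (simp add: algebra_simps power2_eq_square)

lemma Rr_443: "Rr a b c dA dB dC 4 4 3 = (-8*a^2 + 8*c^2) * E1 a b c dA dB dC + (-16*a*b + 16*b*c) * E2 a b c dA dB dC"
  unfolding Rr_unf by (simp add: algebra_simps power2_eq_square)

lemma Rr_444: "Rr a b c dA dB dC 4 4 4 = (-32*a*b + 32*b*c) * E1 a b c dA dB dC + (0) * E2 a b c dA dB dC"
  unfolding Rr_unf by (simp add: algebra_simps power2_eq_square)

lemmas Rr_all = Rr_111 Rr_112 Rr_113 Rr_114 Rr_121 Rr_122 Rr_123 Rr_124 Rr_131 Rr_132 Rr_133 Rr_134 Rr_141 Rr_142 Rr_143 Rr_144 Rr_211 Rr_212 Rr_213 Rr_214 Rr_221 Rr_222 Rr_223 Rr_224 Rr_231 Rr_232 Rr_233 Rr_234 Rr_241 Rr_242 Rr_243 Rr_244 Rr_311 Rr_312 Rr_313 Rr_314 Rr_321 Rr_322 Rr_323 Rr_324 Rr_331 Rr_332 Rr_333 Rr_334 Rr_341 Rr_342 Rr_343 Rr_344 Rr_411 Rr_412 Rr_413 Rr_414 Rr_421 Rr_422 Rr_423 Rr_424 Rr_431 Rr_432 Rr_433 Rr_434 Rr_441 Rr_442 Rr_443 Rr_444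

lemma aux_div:
  fixes D x p1 p2 p3 p4 t1 t2 t3 t4 :: real
  assumes "D \<noteq> 0"
  shows "(x = 1/4*(p1*(t1/D) + p2*(t2/D) - p3*(t3/D) - p4*(t4/D))) \<longleftrightarrow>
    4*D*x - (p1*t1 + p2*t2 - p3*t3 - p4*t4) = 0"
proof -
  have e: "1/4*(p1*(t1/D) + p2*(t2/D) - p3*(t3/D) - p4*(t4/D)) = (p1*t1 + p2*t2 - p3*t3 - p4*t4) / (4*D)"
    using assms by (simp add: field_simps)
  show ?thesis unfolding e using assms by (simp add: field_simps)
qed

lemma cond_Rr:
  assumes "Dt a b c \<noteq> 0"
  shows "cond a b c dA dB dC i j k \<longleftrightarrow> Rr a b c dA dB dC i j k = 0"
  unfolding cond_def Rr_def by (rule aux_div[OF assms])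

lemma main_alg:
  fixes a b c :: real
  assumes "a > c" "c > b" "b > 0"
  shows "(\<forall>i j k. cond a b c dA dB dC i j k) \<longleftrightarrow>
    ((a + c) * (dB 4 - dB 2) = b * (dA 4 - dC 2 + dC 4 - dA 2) \<and>
     (a + c) * (dB 3 - dB 1) = b * (dA 3 - dC 1 + dC 3 - dA 1))"
proof -
  have n: "Dt a b c \<noteq> 0" using Dt_nz assms by blast
  have bac: "32*a*b - 32*b*c \<noteq> 0" using assms by simp
  have iff: "(\<forall>i j k. cond a b c dA dB dC i j k) \<longleftrightarrow> E1 a b c dA dB dC = 0 \<and> E2 a b c dA dB dC = 0"
  proof
    assume H: "\<forall>i j k. cond a b c dA dB dC i j k"
    have "Rr a b c dA dB dC 1 1 1 = 0" "Rr a b c dA dB dC 2 2 2 = 0"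
      using H cond_Rr[OF n] by blast+
    then show "E1 a b c dA dB dC = 0 \<and> E2 a b c dA dB dC = 0"
      using bac unfolding Rr_111 Rr_222 by simp
  next
    assume "E1 a b c dA dB dC = 0 \<and> E2 a b c dA dB dC = 0"
    then show "\<forall>i j k. cond a b c dA dB dC i j k"
      unfolding forall_4 cond_Rr[OF n] Rr_all by simp
  qed
  show ?thesis unfolding iff E1_def E2_def by simp
qed


definition Gn :: "real \<Rightarrow> real \<Rightarrow> real \<Rightarrow> real^4^4" where
  "Gn a b c = (let al = (a - c)*(a - 2*b + c) + 2*(a + 2*b + c)*(a - 2*b + c) + (a + 2*b + c)*(a - c);
     be = (a - c)*(a - 2*b + c) - (a + 2*b + c)*(a - c);
     ga = (a - c)*(a - 2*b + c) - 2*(a + 2*b + c)*(a - 2*b + c) + (a + 2*b + c)*(a - c) in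
     vector [vector [al,be,ga,be], vector [be,al,be,ga], vector [ga,be,al,be], vector [be,ga,be,al]])"

definition Gi :: "real \<Rightarrow> real \<Rightarrow> real \<Rightarrow> real^4^4" where
  "Gi a b c = (\<chi> i j. Gn a b c $ i $ j / Dt a b c)"

lemma Gm_Gi:
  fixes a b c :: real
  assumes "a > c" "c > b" "b > 0"
  shows "Gm a b c ** Gi a b c = mat 1" "Gi a b c ** Gm a b c = mat 1"
proof -
  have n: "Dt a b c \<noteq> 0" using Dt_nz assms by blast
  show "Gm a b c ** Gi a b c = mat 1"
    unfolding vec_eq_iff forall_4 matrix_matrix_mult_def mat_def Gm_def Gi_def Gn_def Let_def
    using n by (simp add: sum_4 field_simps) (simp add: Dt_def algebra_simps)
  show "Gi a b c ** Gm a b c = mat 1"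
    unfolding vec_eq_iff forall_4 matrix_matrix_mult_def mat_def Gm_def Gi_def Gn_def Let_def
    using n by (simp add: sum_4 field_simps) (simp add: Dt_def algebra_simps)
qed

lemma minv_Gm:
  fixes a b c :: real
  assumes "a > c" "c > b" "b > 0"
  shows "matrix_inv (Gm a b c) = Gi a b c"
proof -
  note h = Gm_Gi[OF assms]
  have X: "Gm a b c ** matrix_inv (Gm a b c) = mat 1 \<and> matrix_inv (Gm a b c) ** Gm a b c = mat 1"
    unfolding matrix_inv_def by (rule someI[where x="Gi a b c"]) (use h in simp)
  have "matrix_inv (Gm a b c) = matrix_inv (Gm a b c) ** (Gm a b c ** Gi a b c)"
    by (simp add: h matrix_mul_rid)
  also have "\<dots> = (matrix_inv (Gm a b c) ** Gm a b c) ** Gi a b c"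
    by (simp add: matrix_mul_assoc)
  also have "\<dots> = Gi a b c" using X by (simp add: matrix_mul_lid)
  finally show ?thesis .
qed

lemma metric_Gm: "metricABC A B C p = Gm (A p) (B p) (C p)"
  by (simp add: metricABC_def Gm_def)

lemma pd_metric: "pd (\<lambda>q. metricABC A B C q $ j $ l) m p = Gm (pd A m p) (pd B m p) (pd C m p) $ j $ l"
proof -
  have "\<forall>j l. pd (\<lambda>q. metricABC A B C q $ j $ l) m p = Gm (pd A m p) (pd B m p) (pd C m p) $ j $ l"
    unfolding forall_4 by (simp add: metricABC_def Gm_def)
  then show ?thesis by blast
qed

lemma G1_metric: "G1 (metricABC A B C) i j l p = C1 (\<lambda>m. pd A m p) (\<lambda>m. pd B m p) (\<lambda>m. pd C m p) i j l"
  unfolding G1_def C1_def pd_metric by simp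

lemma Pstruct_ent: "Pstruct p $ m $ j = (if m = sg j then 1 else 0)"
proof -
  have "\<forall>m j. Pstruct p $ m $ j = (if m = sg j then 1 else 0)"
    unfolding forall_4 by (simp add: Pstruct_def)
  then show ?thesis by blast
qed

lemma pd_const: "pd (\<lambda>q. k) i p = 0"
  unfolding pd_def by simp

lemma sum_delta_sg: "(\<Sum>m\<in>UNIV. (if m = sg j then 1 else 0) * (f m :: real)) = f (sg j)"
proof -
  have "(\<Sum>m\<in>UNIV. (if m = sg j then 1 else 0) * f m) = (\<Sum>m\<in>UNIV. if m = sg j then f m else 0)"
    by (rule sum.cong) auto
  then show ?thesis by simp
qed

lemma Ften_conc:
  assumes "A p > C p" "C p > B p" "B p > 0"
  shows "Ften (metricABC A B C) (\<lambda>p. Pstruct p) p (axis i 1) (axis j 1) (axis k 1)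
     = Fc (\<lambda>m. pd A m p) (\<lambda>m. pd B m p) (\<lambda>m. pd C m p) i j k"
proof -
  have inv: "metricABC A B C p ** matrix_inv (metricABC A B C p) = mat 1"
    unfolding metric_Gm minv_Gm[OF assms] using Gm_Gi[OF assms] by simp
  have sym: "metricABC A B C p $ a $ b = metricABC A B C p $ b $ a" for a b
  proof -
    have "\<forall>a b. metricABC A B C p $ a $ b = metricABC A B C p $ b $ a"
      unfolding forall_4 by (simp add: metricABC_def)
    then show ?thesis by blast
  qed
  have pdP: "pd (\<lambda>q. Pstruct q $ l $ j) i p = 0" for l j
    unfolding Pstruct_def by (rule pd_const)
  have comp: "(\<Sum>l\<in>UNIV. Pstruct p $ l $ m * metricABC A B C p $ l $ k)
      = (\<Sum>l\<in>UNIV. metricABC A B C p $ m $ l * Pstruct p $ l $ k)" for m k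
  proof -
    have "\<forall>m k. (\<Sum>l\<in>UNIV. Pstruct p $ l $ m * metricABC A B C p $ l $ k)
      = (\<Sum>l\<in>UNIV. metricABC A B C p $ m $ l * Pstruct p $ l $ k)"
      unfolding forall_4 by (simp add: sum_4 Pstruct_def metricABC_def)
    then show ?thesis by blast
  qed
  have "Ften (metricABC A B C) (\<lambda>p. Pstruct p) p (axis i 1) (axis j 1) (axis k 1)
      = (\<Sum>m\<in>UNIV. Pstruct p $ m $ j * G1 (metricABC A B C) i m k p)
        - (\<Sum>l\<in>UNIV. Pstruct p $ l $ k * G1 (metricABC A B C) i j l p)"
    by (rule F_basis[where G="metricABC A B C" and P="\<lambda>p. Pstruct p"]) (use inv sym pdP comp in auto)
  also have "\<dots> = Fc (\<lambda>m. pd A m p) (\<lambda>m. pd B m p) (\<lambda>m. pd C m p) i j k"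
    unfolding Pstruct_ent sum_delta_sg G1_metric Fc_def ..
  finally show ?thesis .
qed

lemma Gn_sum:
  "(\<Sum>i\<in>UNIV. \<Sum>j\<in>UNIV. Gn a b c $ i $ j * Fc dA dB dC i j k) = tc a b c dA dB dC k"
proof -
  have "\<forall>k. (\<Sum>i\<in>UNIV. \<Sum>j\<in>UNIV. Gn a b c $ i $ j * Fc dA dB dC i j k) = tc a b c dA dB dC k"
    unfolding forall_4 sum_4 Fc_def C1_def sg_simps tc_simps Gn_def Gm_def Let_def
    by (simp add: algebra_simps power2_eq_square)
  then show ?thesis by blast
qed

lemma theta_conc:
  assumes "A p > C p" "C p > B p" "B p > 0"
  shows "theta (metricABC A B C) (\<lambda>p. Pstruct p) p (axis k 1)
     = tc (A p) (B p) (C p) (\<lambda>m. pd A m p) (\<lambda>m. pd B m p) (\<lambda>m. pd C m p) k / Dt (A p) (B p) (C p)"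
  unfolding theta_def Ften_conc[where A=A and B=B and C=C and p=p, OF assms] metric_Gm minv_Gm[OF assms]
  by (simp add: Gi_def sum_divide_distrib flip: Gn_sum)

lemma sum_axis_r: "(\<Sum>l\<in>UNIV. (f l :: real) * axis i 1 $ l) = f i"
proof -
  have "(\<Sum>l\<in>UNIV. f l * axis i 1 $ l) = (\<Sum>l\<in>UNIV. if l = i then f l else 0)"
    by (rule sum.cong) (auto simp: axis_def)
  then show ?thesis by simp
qed

lemma gform_axis: "gform M (axis i 1) (axis j 1) = M $ i $ j"
  unfolding gform_axis2 sum_axis_r ..

lemma P_axis: "Pstruct p *v axis j 1 = axis (sg j) 1"
  unfolding vec_eq_iff mv_axis Pstruct_ent by (simp add: axis_def)

theorem theorem3p5:
  fixes A B C :: "real^4 \<Rightarrow> real" and U :: "(real^4) set"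
  assumes "open U"
    and "smooth_on4 U A" and "smooth_on4 U B" and "smooth_on4 U C"
    and "\<forall>p\<in>U. A p > C p \<and> C p > B p \<and> B p > 0"
  shows "in_W1 U (metricABC A B C) (\<lambda>p. Pstruct p) \<longleftrightarrow>
    (\<forall>p\<in>U.
      (A p + C p) * (pd B 4 p - pd B 2 p) = B p * (pd A 4 p - pd C 2 p + pd C 4 p - pd A 2 p) \<and>
      (A p + C p) * (pd B 3 p - pd B 1 p) = B p * (pd A 3 p - pd C 1 p + pd C 3 p - pd A 1 p))"
proof -
  have pt: "(\<forall>i j k.
     Ften (metricABC A B C) (\<lambda>p. Pstruct p) p (axis i 1) (axis j 1) (axis k 1) = (1/4) * (gform (metricABC A B C p) (axis i 1) (axis j 1) * theta (metricABC A B C) (\<lambda>p. Pstruct p) p (axis k 1)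
        + gform (metricABC A B C p) (axis i 1) (axis k 1) * theta (metricABC A B C) (\<lambda>p. Pstruct p) p (axis j 1)
        - gform (metricABC A B C p) (axis i 1) (Pstruct p *v axis j 1) * theta (metricABC A B C) (\<lambda>p. Pstruct p) p (Pstruct p *v axis k 1)
        - gform (metricABC A B C p) (axis i 1) (Pstruct p *v axis k 1) * theta (metricABC A B C) (\<lambda>p. Pstruct p) p (Pstruct p *v axis j 1)))
    \<longleftrightarrow> ((A p + C p) * (pd B 4 p - pd B 2 p) = B p * (pd A 4 p - pd C 2 p + pd C 4 p - pd A 2 p) \<and>
      (A p + C p) * (pd B 3 p - pd B 1 p) = B p * (pd A 3 p - pd C 1 p + pd C 3 p - pd A 1 p))"
    if "p \<in> U" for p
  proof -
    have h: "A p > C p" "C p > B p" "B p > 0" using assms(5) that by auto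
    show ?thesis
      unfolding P_axis gform_axis Ften_conc[where A=A and B=B and C=C and p=p, OF h] theta_conc[where A=A and B=B and C=C and p=p, OF h] metric_Gm
      using main_alg[OF h, of "\<lambda>m. pd A m p" "\<lambda>m. pd B m p" "\<lambda>m. pd C m p"]
      unfolding cond_def by simp
  qed
  show ?thesis
    unfolding W1_basis using pt by simp
qed

end
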